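(* Let $s,b\ge1$ be integers, $y>0$, and $f(x)=1-x-byx^{s+1}$. Then (1) $f$ has no repeated roots, and (2) $f$ has a positive root $\lambda_1(y)$ whose modulus is smaller than the modulus of every other root of $f$; moreover $\lambda_1(y)<1$. *)

theory Defs
  imports "HOL-Computational_Algebra.Polynomial"
begin

definition fpoly :: "nat \<Rightarrow> nat \<Rightarrow> real \<Rightarrow> complex poly" where
  "fpoly s b y = [:1, -1:] - monom (complex_of_real (real b * y)) (s + 1)"

end

theory Submission
  imports Defs
begin

lemma poly_f: "poly (fpoly s b y) z = 1 - z - complex_of_real (real b * y) * z ^ (s+1)"
  by (simp add: fpoly_def poly_monom)

lemma poly_df: "poly (pderiv (fpoly s b y)) z = - 1 - of_nat (s+1) * complex_of_real (real b * y) * z ^ s"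
  by (simp add: fpoly_def pderiv_diff pderiv_monom pderiv_pCons poly_monom)

theorem lemma2p15:
  fixes s b :: nat and y :: real
  assumes "s \<ge> 1" and "b \<ge> 1" and "y > 0"
  shows "rsquarefree (fpoly s b y) \<and>
         (\<exists>l1::real. l1 > 0 \<and> l1 < 1 \<and> poly (fpoly s b y) (complex_of_real l1) = 0 \<and>
            (\<forall>z. poly (fpoly s b y) z = 0 \<and> z \<noteq> complex_of_real l1 \<longrightarrow> l1 < norm z))"
proof -
  define c where "c = real b * y"
  have c: "c > 0" using assms by (simp add: c_def)
  have sq: "rsquarefree (fpoly s b y)"
    unfolding rsquarefree_roots
  proof (intro allI notI)
    fix z assume h: "poly (fpoly s b y) z = 0 \<and> poly (pderiv (fpoly s b y)) z = 0"
    hence e1: "1 - z - of_real c * z^(s+1) = 0" and e2: "- 1 - of_nat (s+1) * of_real c * z^s = 0"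
      by (auto simp: poly_f poly_df c_def)
    from e2 have "z * (- 1 - of_nat (s+1) * of_real c * z^s) = 0" by simp
    hence e3: "z + of_nat (s+1) * (of_real c * z^(s+1)) = 0"
      by (simp only: power_Suc Suc_eq_plus1[symmetric]) (simp add: algebra_simps, metis add.inverse_inverse neg_eq_iff_add_eq_0 add.commute)
    have "of_real c * z^(s+1) = 1 - z" using e1 by simp
    with e3 have "z + of_nat (s+1) * (1 - z) = 0" by simp
    hence zs: "z * of_nat s = of_nat (s+1)" by (simp add: algebra_simps)
    have sp: "(of_nat s :: complex) \<noteq> 0" using assms by simp
    from zs have zr: "z = of_real ((s+1)/s)" using sp by (simp add: field_simps)
    have "(real (s+1) * c * ((s+1)/s)^s) > 0" using c assms by simp
    moreover from e2 have "of_real (real (s+1) * c * ((s+1)/s)^s) = (-1::complex)"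
      unfolding zr by simp
    hence "real (s+1) * c * ((s+1)/s)^s = -1"
      by (metis of_real_eq_iff of_real_minus of_real_1)
    ultimately show False by simp
  qed
  define g where "g = (\<lambda>x::real. 1 - x - c * x^(s+1))"
  have gc: "continuous_on {0..1} g" unfolding g_def by (intro continuous_intros)
  have "\<exists>l\<ge>0. l \<le> 1 \<and> g l = 0"
    by (rule IVT2'[of g 1 0 0]) (use c gc in \<open>auto simp: g_def\<close>)
  then obtain l where l: "0 \<le> l" "l \<le> 1" "g l = 0" by blast
  have l0: "l > 0" using l by (cases "l = 0") (auto simp: g_def)
  have l1: "l < 1" using l c by (cases "l = 1") (auto simp: g_def)
  have gl: "c * l^(s+1) = 1 - l" using l(3) by (simp add: g_def)
  have root: "poly (fpoly s b y) (complex_of_real l) = 0"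
  proof -
    have "complex_of_real (g l) = 0" using l by simp
    thus ?thesis by (simp add: poly_f g_def c_def)
  qed
  have minm: "l < norm z" if hz: "poly (fpoly s b y) z = 0" "z \<noteq> complex_of_real l" for z
  proof (rule ccontr)
    assume "\<not> l < norm z"
    hence r: "norm z \<le> l" by simp
    from hz have "1 - z - of_real c * z^(s+1) = 0"
      by (simp only: poly_f c_def[symmetric])
    hence "z + of_real c * z^(s+1) = 1" by (simp add: algebra_simps)
    hence e: "Re z + Re (of_real c * z^(s+1)) = 1"
      by (metis plus_complex.sel(1) one_complex.sel(1))
    have "Re (of_real c * z^(s+1)) \<le> norm (of_real c * z^(s+1))" by (rule complex_Re_le_cmod)
    also have "\<dots> = c * norm z ^ (s+1)" using c by (simp add: norm_mult norm_power)
    also have "\<dots> \<le> c * l^(s+1)" using c r by (intro mult_left_mono power_mono) auto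
    finally have "Re z \<ge> l" using e gl by linarith
    moreover have "Re z \<le> norm z" by (rule complex_Re_le_cmod)
    ultimately have eq: "Re z = norm z" "Re z = l" using r by linarith+
    hence "Im z = 0"
      by (metis cmod_eq_Re abs_of_nonneg complex_eq_cancel_iff2 norm_ge_zero cmod_power2 add_cancel_left_right zero_eq_power2 power2_abs)
    hence "z = complex_of_real l" using eq by (simp add: complex_eq_iff)
    thus False using hz by simp
  qed
  show ?thesis using sq l0 l1 root minm by blast
qed

end
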